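(* For the step set $\mathcal A$ and for both $t_0=\tfrac12$ and $t_0=-\tfrac12$, $$Q_{\mathcal A}(x,0,t_0)=\sum_{n\ge0}\frac{T_n}{4^n}x^{2n},$$ where $(T_n)_{n\ge0}=(1,2,16,272,7936,\dots)$ is the sequence of tangent numbers, defined by $\tan x=\sum_{n\ge0}T_n\frac{x^{2n+1}}{(2n+1)!}$. Equivalently, $$Q_{\mathcal A}(x,0,\tfrac12)=2\sum_{n\ge0}(2^{2n+2}-1)\frac{(-1)^n}{n+1}B_{2n+2}x^{2n},$$ where $(B_n)_{n\ge0}$ are the Bernoulli numbers.
   Context: Let $\mathbb N=\{0,1,2,\dots\}$ and $\mathcal A=\{(-1,1),(1,1),(1,-1)\}$. $\#_{\mathcal A}\{(0,0)\xrightarrow{n}(i,j)\}$ is the number of sequences $p_0=(0,0),p_1,\dots,p_n=(i,j)$ of points of $\mathbb N^2$ with $p_m-p_{m-1}\in\mathcal A$. For $t_0\in\{\tfrac12,-\tfrac12\}$, $Q_{\mathcal A}(x,0,t_0)=\sum_{i\ge0}\big(\sum_{n\ge0}\#_{\mathcal A}\{(0,0)\xrightarrow{n}(i,0)\}t_0^n\big)x^i$ (the inner series converge). Bernoulli numbers are defined by $\sum_{n\ge0}B_n\frac{x^n}{n!}=\frac{x}{e^x-1}$. *)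

theory Defs
  imports Complex_Main
begin

definition stepsA :: "(int \<times> int) set" where
  "stepsA = {(-1, 1), (1, 1), (1, -1)}"

text \<open>Walks p_0 = (0,0), ..., p_n = (i,j) in N^2 with steps in A, encoded as
  functions nat => nat x nat that are constantly (0,0) after index n
  (this padding makes the encoding a bijection with the walks).\<close>
definition walks :: "nat \<Rightarrow> nat \<times> nat \<Rightarrow> (nat \<Rightarrow> nat \<times> nat) set" where
  "walks n q = {p. p 0 = (0, 0) \<and> p n = q \<and>
      (\<forall>m\<in>{1..n}. (int (fst (p m)) - int (fst (p (m - 1))),
                    int (snd (p m)) - int (snd (p (m - 1)))) \<in> stepsA) \<and>
      (\<forall>m>n. p m = (0, 0))}"

definition num_walks :: "nat \<Rightarrow> nat \<times> nat \<Rightarrow> nat" where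
  "num_walks n q = card (walks n q)"

definition tangent_number :: "nat \<Rightarrow> real" where
  "tangent_number = (THE T. \<exists>\<epsilon>>0. \<forall>x::real. \<bar>x\<bar> < \<epsilon> \<longrightarrow>
      (\<lambda>n. T n * x ^ (2 * n + 1) / fact (2 * n + 1)) sums tan x)"

definition bernoulli_num :: "nat \<Rightarrow> real" where
  "bernoulli_num = (THE B. \<exists>\<epsilon>>0. \<forall>x::real. x \<noteq> 0 \<and> \<bar>x\<bar> < \<epsilon> \<longrightarrow>
      (\<lambda>n. B n * x ^ n / fact n) sums (x / (exp x - 1)))"

end

theory Submission
  imports Defs
begin
declare binomial_Suc_Suc[simp del]

fun gs :: "nat \<Rightarrow> real" where
  "gs a = (-1)^a / (2*a+2) * (2 - (\<Sum>k<a. (-1)^k * real ((2*a+2) choose (2*k+1)) * gs k))"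

declare gs.simps[simp del]

lemma gs_rec: "(\<Sum>k\<le>a. (-1)^k * real ((2*a+2) choose (2*k+1)) * gs k) = 2"
proof -
  define S where "S = (\<Sum>k<a. (-1)^k * real ((2*a+2) choose (2*k+1)) * gs k)"
  have c: "real ((2*a+2) choose (2*a+1)) = 2*a+2"
    by (metis binomial_Suc_n add_2_eq_Suc' Suc_eq_plus1 of_nat_add of_nat_mult of_nat_numeral of_nat_1 add.commute) 
  have "(\<Sum>k\<le>a. (-1)^k * real ((2*a+2) choose (2*k+1)) * gs k)
      = S + (-1)^a * real ((2*a+2) choose (2*a+1)) * gs a"
    unfolding S_def by (simp only: sum.atMost_Suc lessThan_Suc_atMost[symmetric] sum.lessThan_Suc)
  also have "(-1)^a * real ((2*a+2) choose (2*a+1)) * gs a = 2 - S"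
    unfolding c S_def
    by (subst gs.simps) (simp add: field_simps flip: power_add mult_2)
  finally show ?thesis by simp
qed

definition FF :: "nat \<Rightarrow> nat \<Rightarrow> real" where
  "FF a x = (\<Sum>j\<le>a. (-1)^j * real ((x+1) choose (2*j+1)) * gs (a-j))"

lemma binom_d2: "real ((n+2) choose (m+2)) - 2 * real ((n+1) choose (m+2)) + real (n choose (m+2))
   = real (n choose m)"
proof -
  have 1: "(n+2) choose (m+2) = ((n+1) choose (m+2)) + ((n+1) choose (m+1))"
    by (simp add: binomial_Suc_Suc)
  have 2: "(n+1) choose (m+2) = (n choose (m+2)) + (n choose (m+1))"
    by (simp add: binomial_Suc_Suc)
  have 3: "(n+1) choose (m+1) = (n choose (m+1)) + (n choose m)"
    by (simp add: binomial_Suc_Suc)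
  show ?thesis by (simp only: 1 2 3 of_nat_add) (simp add: algebra_simps del: binomial_Suc_Suc)
qed

lemma gs0: "gs 0 = 1"
  by (subst gs.simps) simp

lemma FF_0: "FF a 0 = gs a"
proof -
  have "FF a 0 = (\<Sum>j\<in>{0}. (-1)^j * real ((0+1) choose (2*j+1)) * gs (a-j))"
    unfolding FF_def by (rule sum.mono_neutral_right) (auto simp: binomial_eq_0_iff simp del: binomial_Suc_Suc)
  then show ?thesis by simp
qed

lemma FF_1: "FF a 1 = 2 * gs a"
proof -
  have "FF a 1 = (\<Sum>j\<in>{0}. (-1)^j * real ((1+1) choose (2*j+1)) * gs (a-j))"
    unfolding FF_def by (rule sum.mono_neutral_right) (auto simp: binomial_eq_0_iff simp del: binomial_Suc_Suc)
  then show ?thesis by simp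
qed

lemma FF_d2: "FF (Suc b) (z+2) + FF (Suc b) z + FF b z = 2 * FF (Suc b) (z+1)"
proof -
  have "FF (Suc b) (z+2) - 2 * FF (Suc b) (z+1) + FF (Suc b) z
     = (\<Sum>j\<le>Suc b. (-1)^j * gs (Suc b - j) * (real ((z+3) choose (2*j+1)) - 2 * real ((z+2) choose (2*j+1)) + real ((z+1) choose (2*j+1))))"
    unfolding FF_def by (simp add: sum_distrib_left sum_subtractf sum.distrib[symmetric] algebra_simps eval_nat_numeral)
  also have "\<dots> = (\<Sum>i\<le>b. (-1)^(Suc i) * gs (b - i) * real ((z+1) choose (2*i+1)))"
  proof -
    have e: "real ((z+3) choose (2*Suc i+1)) - 2 * real ((z+2) choose (2*Suc i+1)) + real ((z+1) choose (2*Suc i+1))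
       = real ((z+1) choose (2*i+1))" for i
      using binom_d2[of "z+1" "2*i+1"] by (simp add: eval_nat_numeral algebra_simps del: binomial_Suc_Suc)
    have z: "real ((z+3) choose 1) - 2 * real ((z+2) choose 1) + real ((z+1) choose 1) = 0"
      by simp
    show ?thesis
      by (subst sum.atMost_Suc_shift) (simp only: e z diff_Suc_Suc mult_zero_right add_0 mult_zero_left)
  qed
  also have "\<dots> = - FF b z"
    unfolding FF_def sum_negf[symmetric] by (rule sum.cong[OF refl]) (simp del: binomial_Suc_Suc)
  finally show ?thesis by simp
qed

lemma FF_top: "FF a (2*a+1) = 2 * (-1)^a"
proof -
  have "FF a (2*a+1) = (\<Sum>k\<le>a. (-1)^(a-k) * real ((2*a+2) choose (2*(a-k)+1)) * gs k)"
    unfolding FF_def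
    by (rule sum.reindex_bij_witness[where i="\<lambda>k. a - k" and j="\<lambda>k. a - k"]) auto
  also have "\<dots> = (\<Sum>k\<le>a. (-1)^a * ((-1)^k * real ((2*a+2) choose (2*k+1)) * gs k))"
  proof (rule sum.cong[OF refl])
    fix k assume k: "k \<in> {..a}"
    have s: "(2*a+2) choose (2*(a-k)+1) = (2*a+2) choose (2*k+1)"
    proof -
      have "2*(a-k)+1 \<le> 2*a+2" "2*a+2 - (2*(a-k)+1) = 2*k+1" using k by auto
      then show ?thesis by (metis binomial_symmetric)
    qed
    have kk: "(-1::real)^k * (-1)^k = 1" by (simp add: power_add[symmetric])
    have "a = (a-k) + k" using k by simp
    then have "(-1::real)^a * (-1)^k = (-1)^(a-k) * ((-1)^k * (-1)^k)"
      by (metis power_add mult.assoc)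
    then have p: "(-1::real)^(a-k) = (-1)^a * (-1)^k" using kk by simp
    show "(-1)^(a-k) * real ((2*a+2) choose (2*(a-k)+1)) * gs k = (-1)^a * ((-1)^k * real ((2*a+2) choose (2*k+1)) * gs k)"
      unfolding s p by (simp only: mult.assoc)
  qed
  also have "\<dots> = 2 * (-1)^a"
    by (simp only: sum_distrib_left[symmetric] gs_rec)
  finally show ?thesis .
qed

definition GG :: "nat \<times> nat \<Rightarrow> real" where
  "GG q = (if even (fst q + snd q) then FF ((fst q + snd q) div 2) (fst q) else 0)"

definition PS :: "(nat \<times> nat \<Rightarrow> real) \<Rightarrow> nat \<times> nat \<Rightarrow> real" where
  "PS f q = (if 1 \<le> snd q then f (fst q + 1, snd q - 1) else 0)
          + (if 1 \<le> fst q \<and> 1 \<le> snd q then f (fst q - 1, snd q - 1) else 0)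
          + (if 1 \<le> fst q then f (fst q - 1, snd q + 1) else 0)"

lemma FF_edge: "2 * FF (Suc b) (2*b+2) = FF (Suc b) (2*b+1)"
proof -
  have "FF (Suc b) (2*b+1+2) + FF (Suc b) (2*b+1) + FF b (2*b+1) = 2 * FF (Suc b) (2*b+1+1)"
    by (rule FF_d2)
  moreover have "FF (Suc b) (2*b+1+2) = 2 * (-1)^(Suc b)"
    using FF_top[of "Suc b"] by (simp add: algebra_simps)
  moreover have "FF b (2*b+1) = 2 * (-1)^b" by (rule FF_top)
  ultimately show ?thesis by (simp add: algebra_simps)
qed

lemma GG_eq: "GG (x,y) = (if x=0 \<and> y=0 then 1 else 0) + PS GG (x,y) / 2"
proof (cases "even (x+y)")
  case False
  have a: "odd (x + 1 + (y - 1))" if "1 \<le> y" using False that by simp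
  have b: "odd (x - 1 + (y - 1))" if "1 \<le> y" "1 \<le> x" using False that
    by (metis (no_types) Nat.add_diff_assoc2 add_diff_cancel_left' diff_add_inverse2 even_add odd_one
        le_add_diff_inverse add.commute)
  have c: "odd (x - 1 + (y + 1))" if "1 \<le> x" using False that by simp
  have d: "\<not> (x = 0 \<and> y = 0)" using False by auto
  show ?thesis using False a b c d by (auto simp: GG_def PS_def)
next
  case True
  consider "x = 0" "y = 0" | "x = 0" "1 \<le> y" | "1 \<le> x" "y = 0" | "1 \<le> x" "1 \<le> y" by linarith
  then show ?thesis
  proof cases
    case 1
    then show ?thesis by (simp add: GG_def PS_def FF_0 gs0)
  next
    case 2
    then obtain a where y: "y = 2*a" using True by auto
    have "GG (x,y) = gs a" using 2 y by (simp add: GG_def FF_0)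
    moreover have "PS GG (x,y) = 2 * gs a" using 2 y
      using FF_1[of a] by (simp add: GG_def PS_def)
    ultimately show ?thesis using 2 by simp
  next
    case 3
    from True 3 obtain b' where x': "x = 2*b'" by auto
    with 3 have "b' \<ge> 1" by simp
    define b where "b = b' - 1"
    have x: "x = 2*b+2" using x' \<open>b' \<ge> 1\<close> unfolding b_def by simp
    have "GG (x,y) = FF (Suc b) (2*b+2)" using 3 x by (simp add: GG_def)
    moreover have "PS GG (x,y) = GG (2*b+1, 1)" using 3 x
      by (simp add: PS_def)
    moreover have "GG (2*b+1, 1) = FF (Suc b) (2*b+1)"
      by (simp add: GG_def)
    ultimately show ?thesis using 3 FF_edge[of b] by simp
  next
    case 4
    obtain x' where "x = Suc x'" using 4 by (cases x) auto
    moreover obtain y' where "y = Suc y'" using 4 by (cases y) auto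
    ultimately have xy: "x = Suc x'" "y = Suc y'" by auto
    have "even (x' + y')" using True xy by simp
    then obtain c where c: "x' + y' = 2*c" by (rule evenE)
    have "(x + y) div 2 = Suc c" using xy c by simp
    have "GG (x,y) = FF (Suc c) (x'+1)" using xy c by (simp add: GG_def)
    moreover have "PS GG (x,y) = FF (Suc c) (x'+2) + FF c x' + FF (Suc c) x'"
      using xy c by (simp add: GG_def PS_def)
    ultimately show ?thesis using 4 FF_d2[of c x'] by simp
  qed
qed

lemma minp:
  fixes d :: "nat \<Rightarrow> real"
  assumes c: "\<And>x. x \<le> s \<Longrightarrow> (if x < s then d (x+1) else 0) + (if 1 \<le> x then d (x-1) else 0) \<le> 2 * d x"
  shows "\<And>x. x \<le> s \<Longrightarrow> 0 \<le> d x"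
proof -
  define e where "e x = (if x \<le> s then d x else 0)" for x
  have cl: "real (x+1) * e (x+1) \<le> real (x+2) * d x" if "x \<le> s" for x
    using that
  proof (induction x)
    case 0
    have "e 1 \<le> 2 * d 0" using c[of 0] unfolding e_def by (cases "0 < s") auto
    then show ?case by simp
  next
    case (Suc m)
    have ih: "real (m+1) * d (Suc m) \<le> real (m+2) * d m"
      using Suc by (simp add: e_def)
    have cc: "e (Suc m + 1) + d m \<le> 2 * d (Suc m)"
      using c[of "Suc m"] Suc.prems unfolding e_def by (cases "Suc m < s") auto
    have "real (m+2) * (e (Suc m + 1) + d m) \<le> real (m+2) * (2 * d (Suc m))"
      by (rule mult_left_mono[OF cc]) simp
    then show ?case using ih by (simp add: algebra_simps)
  qed
  have ds: "0 \<le> d s"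
  proof -
    have "real (s+1) * e (s+1) \<le> real (s+2) * d s" by (rule cl) simp
    then have "0 \<le> real (s+2) * d s" by (simp add: e_def)
    then show ?thesis by (simp add: zero_le_mult_iff)
  qed
  have "0 \<le> d (s - k)" if "k \<le> s" for k
    using that
  proof (induction k)
    case 0 then show ?case using ds by simp
  next
    case (Suc k)
    have x: "s - Suc k + 1 = s - k" "s - Suc k + 1 \<le> s" using Suc.prems by auto
    have "real (s - Suc k + 1) * e (s - Suc k + 1) \<le> real (s - Suc k + 2) * d (s - Suc k)"
      by (rule cl) simp
    then have "real (s - Suc k + 1) * d (s - k) \<le> real (s - Suc k + 2) * d (s - Suc k)"
      using x by (simp add: e_def)
    moreover have "0 \<le> real (s - Suc k + 1) * d (s - k)" using Suc by simp
    ultimately have "0 \<le> real (s - Suc k + 2) * d (s - Suc k)" by linarith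
    then show ?case by (simp add: zero_le_mult_iff)
  qed
  then show "\<And>x. x \<le> s \<Longrightarrow> 0 \<le> d x" by (metis diff_diff_cancel diff_le_self)
qed

lemma diag_cond:
  fixes f :: "nat \<times> nat \<Rightarrow> real"
  assumes "x \<le> s"
  shows "PS f (x, s - x) = (if x < s then f (x+1, s - (x+1)) else 0) + (if 1 \<le> x then f (x-1, s - (x-1)) else 0)
           + (if 1 \<le> x \<and> x < s then f (x-1, s - x - 1) else 0)"
  using assms unfolding PS_def by (auto simp: Suc_diff_Suc Suc_diff_le)

lemma GG_nonneg: "0 \<le> GG q"
proof -
  have "\<forall>x y. x + y = s \<longrightarrow> 0 \<le> GG (x,y)" for s
  proof (induction s rule: less_induct)
    case (less s)
    define d where "d x = GG (x, s - x)" for x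
    have low: "0 \<le> GG (x-1, s-x-1)" if "1 \<le> x" "x < s" for x
      using less[of "x - 1 + (s - x - 1)"] that by auto
    have "0 \<le> d x" if "x \<le> s" for x
    proof (rule minp[of s d])
      fix x assume x: "x \<le> s"
      have "GG (x, s-x) = (if x = 0 \<and> s - x = 0 then 1 else 0) + PS GG (x, s-x) / 2"
        by (rule GG_eq)
      then show "(if x < s then d (x+1) else 0) + (if 1 \<le> x then d (x-1) else 0) \<le> 2 * d x"
        using diag_cond[OF x, of GG] low[of x] unfolding d_def
        by (auto split: if_splits)
    qed (use that in auto)
    then show ?case unfolding d_def by (metis add_diff_cancel_left' le_add1)
  qed
  then show ?thesis by (cases q) auto
qed

definition isol :: "(nat \<times> nat \<Rightarrow> real) \<Rightarrow> bool" where
  "isol f \<longleftrightarrow> (\<forall>q. f q = (if q = (0,0) then 1 else 0) + PS f q / 2)"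

lemma isol_GG: "isol GG"
  unfolding isol_def using GG_eq by (auto)

lemma isol_unique:
  assumes "isol f" "isol g"
  shows "f = g"
proof -
  define D where "D q = f q - g q" for q
  have De: "D q = PS D q / 2" for q
  proof -
    have "PS D q = PS f q - PS g q" unfolding D_def PS_def by simp
    moreover have "f q = (if q = (0,0) then 1 else 0) + PS f q / 2" "g q = (if q = (0,0) then 1 else 0) + PS g q / 2"
      using assms unfolding isol_def by blast+
    ultimately show ?thesis unfolding D_def by (simp add: diff_divide_distrib)
  qed
  have "\<forall>x y. x + y = s \<longrightarrow> D (x,y) = 0" for s
  proof (induction s rule: less_induct)
    case (less s)
    define d where "d x = D (x, s - x)" for x
    have low: "D (x-1, s-x-1) = 0" if "1 \<le> x" "x < s" for x
      using less[of "x - 1 + (s - x - 1)"] that by auto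
    have eq: "(if x < s then d (x+1) else 0) + (if 1 \<le> x then d (x-1) else 0) = 2 * d x" if x: "x \<le> s" for x
      using De[of "(x, s-x)"] diag_cond[OF x, of D] low[of x] unfolding d_def
      by (auto split: if_splits)
    have "0 \<le> d x" if "x \<le> s" for x
    proof (rule minp[of s d])
      fix x assume xs: "x \<le> s"
      show "(if x < s then d (x+1) else 0) + (if 1 \<le> x then d (x-1) else 0) \<le> 2 * d x"
        using eq[OF xs] by linarith
    qed (use that in auto)
    moreover have "0 \<le> - d x" if "x \<le> s" for x
    proof (rule minp[of s "\<lambda>x. - d x"])
      fix x assume xs: "x \<le> s"
      show "(if x < s then - d (x+1) else 0) + (if 1 \<le> x then - d (x-1) else 0) \<le> 2 * - d x"
        using eq[OF xs] by (simp split: if_splits; linarith)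
    qed (use that in auto)
    ultimately show ?case unfolding d_def by (metis add_diff_cancel_left' le_add1 neg_0_le_iff_le order_antisym)
  qed
  then show ?thesis unfolding D_def by (auto simp: fun_eq_iff)
qed

lemma GG_swap: "GG (y,x) = GG (x,y)"
proof -
  have "isol (\<lambda>(a,b). GG (b,a))"
    unfolding isol_def
  proof
    fix q :: "nat \<times> nat"
    obtain a b where q: "q = (a,b)" by (cases q)
    have "PS (\<lambda>(a,b). GG (b,a)) (a,b) = PS GG (b,a)"
      unfolding PS_def by auto
    then show "(case q of (a, b) \<Rightarrow> GG (b, a)) = (if q = (0, 0) then 1 else 0) + PS (\<lambda>(a, b). GG (b, a)) q / 2"
      using GG_eq[of b a] q by auto
  qed
  then have "(\<lambda>(a,b). GG (b,a)) = GG" using isol_GG isol_unique by blast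
  then show ?thesis by (metis case_prod_conv)
qed

definition preds :: "nat \<times> nat \<Rightarrow> (nat \<times> nat) set" where
  "preds q = {r. (int (fst q) - int (fst r), int (snd q) - int (snd r)) \<in> stepsA}"

lemma preds_expl: "preds (x,y) = (if 1 \<le> y then {(x+1,y-1)} else {}) \<union> (if 1 \<le> x \<and> 1 \<le> y then {(x-1,y-1)} else {})
   \<union> (if 1 \<le> x then {(x-1,y+1)} else {})"
  unfolding preds_def stepsA_def by (auto split: if_splits)

lemma finite_preds: "finite (preds q)"
  by (cases q) (simp add: preds_expl)

lemma walks_0: "walks 0 q = (if q = (0,0) then {\<lambda>_. (0,0)} else {})"
  unfolding walks_def apply (auto simp: fun_eq_iff) by (metis neq0_conv)

lemma walks_Suc: "walks (Suc n) q = (\<Union>r\<in>preds q. (\<lambda>p. p(Suc n := q)) ` walks n r)"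
proof (rule set_eqI iffI)+
  fix p assume p: "p \<in> walks (Suc n) q"
  let ?r = "p n"
  let ?p' = "p(Suc n := (0,0))"
  have "?r \<in> preds q" using p unfolding walks_def preds_def by force
  moreover have "?p' \<in> walks n ?r"
    using p unfolding walks_def by auto
  moreover have "p = ?p'(Suc n := q)" using p unfolding walks_def by auto
  ultimately show "p \<in> (\<Union>r\<in>preds q. (\<lambda>p. p(Suc n := q)) ` walks n r)" by blast
next
  fix p assume "p \<in> (\<Union>r\<in>preds q. (\<lambda>p. p(Suc n := q)) ` walks n r)"
  then obtain r p' where r: "r \<in> preds q" and p': "p' \<in> walks n r" and pp: "p = p'(Suc n := q)" by blast
  have st: "\<forall>m\<in>{1..n}. (int (fst (p' m)) - int (fst (p' (m - 1))), int (snd (p' m)) - int (snd (p' (m - 1)))) \<in> stepsA"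
    using p' unfolding walks_def by blast
  have "\<forall>m\<in>{1..Suc n}. (int (fst (p m)) - int (fst (p (m - 1))), int (snd (p m)) - int (snd (p (m - 1)))) \<in> stepsA"
  proof
    fix m assume m: "m \<in> {1..Suc n}"
    show "(int (fst (p m)) - int (fst (p (m - 1))), int (snd (p m)) - int (snd (p (m - 1)))) \<in> stepsA"
    proof (cases "m = Suc n")
      case True
      then show ?thesis using r p' pp unfolding preds_def walks_def by auto
    next
      case False
      then have "m \<in> {1..n}" using m by auto
      then show ?thesis using st pp by auto
    qed
  qed
  then show "p \<in> walks (Suc n) q" using p' pp unfolding walks_def by auto
qed

lemma finite_walks: "finite (walks n q)"
proof (induction n arbitrary: q)
  case 0 then show ?case by (simp add: walks_0)
next
  case (Suc n) then show ?case by (simp add: walks_Suc finite_preds)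
qed

lemma card_walks_Suc: "num_walks (Suc n) q = (\<Sum>r\<in>preds q. num_walks n r)"
proof -
  have "num_walks (Suc n) q = (\<Sum>r\<in>preds q. card ((\<lambda>p. p(Suc n := q)) ` walks n r))"
    unfolding num_walks_def walks_Suc
  proof (rule card_UN_disjoint)
    show "finite (preds q)" by (rule finite_preds)
    show "\<forall>i\<in>preds q. finite ((\<lambda>p. p(Suc n := q)) ` walks n i)" using finite_walks by blast
    show "\<forall>i\<in>preds q. \<forall>j\<in>preds q. i \<noteq> j \<longrightarrow>
      (\<lambda>p. p(Suc n := q)) ` walks n i \<inter> (\<lambda>p. p(Suc n := q)) ` walks n j = {}"
    proof (intro ballI impI)
      fix i j :: "nat \<times> nat" assume "i \<in> preds q" "j \<in> preds q" and ij: "i \<noteq> j"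
      have key: "p1(Suc n := q) = p2(Suc n := q) \<Longrightarrow> p1 n = p2 n" for p1 p2 :: "nat \<Rightarrow> nat \<times> nat"
      proof -
        assume "p1(Suc n := q) = p2(Suc n := q)"
        from arg_cong[OF this, of "\<lambda>f. f n"] show "p1 n = p2 n" by simp
      qed
      show "(\<lambda>p. p(Suc n := q)) ` walks n i \<inter> (\<lambda>p. p(Suc n := q)) ` walks n j = {}"
      proof (rule ccontr)
        assume "(\<lambda>p. p(Suc n := q)) ` walks n i \<inter> (\<lambda>p. p(Suc n := q)) ` walks n j \<noteq> {}"
        then obtain f where f1: "f \<in> (\<lambda>p. p(Suc n := q)) ` walks n i" and f2: "f \<in> (\<lambda>p. p(Suc n := q)) ` walks n j"
          by (meson disjoint_iff)
        from f1 obtain p1 where w1: "p1 \<in> walks n i" and e1: "f = p1(Suc n := q)" by (rule imageE)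
        from f2 obtain p2 where w2: "p2 \<in> walks n j" and e2: "f = p2(Suc n := q)" by (rule imageE)
        have e: "p1(Suc n := q) = p2(Suc n := q)" using e1 e2 by simp
        have "p1 n = i" using w1 unfolding walks_def by simp
        moreover have "p2 n = j" using w2 unfolding walks_def by simp
        moreover have "p1 n = p2 n" using key[OF e] .
        ultimately have "i = j" by simp
        then show False using ij by simp
      qed
    qed
  qed
  also have "\<dots> = (\<Sum>r\<in>preds q. num_walks n r)"
  proof (rule sum.cong[OF refl])
    fix r
    have "inj_on (\<lambda>p. p(Suc n := q)) (walks n r)"
    proof (rule inj_onI)
      fix p1 p2 assume w: "p1 \<in> walks n r" "p2 \<in> walks n r" and e: "p1(Suc n := q) = p2(Suc n := q)"
      have z1: "p1 (Suc n) = (0,0)" using w(1) unfolding walks_def by simp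
      have z2: "p2 (Suc n) = (0,0)" using w(2) unfolding walks_def by simp
      show "p1 = p2"
      proof (rule ext)
        fix m show "p1 m = p2 m"
        proof (cases "m = Suc n")
          case True then show ?thesis using z1 z2 by simp
        next
          case False
          from arg_cong[OF e, of "\<lambda>f. f m"] show ?thesis using False by simp
        qed
      qed
    qed
    then show "card ((\<lambda>p. p(Suc n := q)) ` walks n r) = num_walks n r"
      unfolding num_walks_def by (rule card_image)
  qed
  finally show ?thesis .
qed

lemma num_walks_0: "num_walks 0 q = (if q = (0,0) then 1 else 0)"
  unfolding num_walks_def walks_0 by simp

lemma num_walks_Suc: "real (num_walks (Suc n) q) = PS (\<lambda>r. real (num_walks n r)) q"
proof -
  obtain x y where q: "q = (x,y)" by (cases q)
  have "real (num_walks (Suc n) q) = (\<Sum>r\<in>preds (x,y). real (num_walks n r))"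
    unfolding card_walks_Suc q by simp
  also have "\<dots> = PS (\<lambda>r. real (num_walks n r)) (x,y)"
  proof -
    consider "x = 0" "y = 0" | "x = 0" "1 \<le> y" | "1 \<le> x" "y = 0" | "1 \<le> x" "1 \<le> y" by linarith
    then show ?thesis
    proof cases
      case 4
      have d: "(x+1, y-1) \<noteq> (x-1,y-1)" "(x+1,y-1) \<noteq> (x-1,y+1)" "(x-1,y-1) \<noteq> (x-1,y+1)" using 4 by auto
      have e: "preds (x,y) = {(x+1,y-1), (x-1,y-1), (x-1,y+1)}" using 4 by (auto simp: preds_expl)
      show ?thesis unfolding e using d 4 by (simp add: PS_def)
    qed (auto simp: preds_expl PS_def)
  qed
  finally show ?thesis using q by simp
qed

lemma num_walks_parity: "num_walks n (x,y) \<noteq> 0 \<Longrightarrow> even (n + x)"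
proof (induction n arbitrary: x y)
  case 0 then show ?case by (simp add: num_walks_0 split: if_splits)
next
  case (Suc n)
  show ?case
  proof (rule ccontr)
    assume o: "odd (Suc n + x)"
    have z: "real (num_walks n r) = 0" if "odd (n + fst r)" for r
      using Suc.IH[of "fst r" "snd r"] that by (cases r) auto
    have z1: "real (num_walks n (x+1, b)) = 0" for b using o by (intro z) simp
    have z2: "real (num_walks n (x-1, b)) = 0" if "1 \<le> x" for b using o that by (intro z) auto
    have "PS (\<lambda>r. real (num_walks n r)) (x,y) = 0"
      unfolding PS_def using z1 z2 by simp
    then show False using Suc.prems num_walks_Suc[of n "(x,y)"] by simp
  qed
qed

definition SS :: "nat \<Rightarrow> nat \<times> nat \<Rightarrow> real" where
  "SS N q = (\<Sum>n<N. real (num_walks n q) * (1/2)^n)"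

lemma PS_lin: "PS (\<lambda>r. f r + c * g r) q = PS f q + c * PS g q"
  unfolding PS_def by (simp add: algebra_simps)

lemma PS_mono: "(\<And>r. f r \<le> g r) \<Longrightarrow> PS f q \<le> PS g q"
  unfolding PS_def by (intro add_mono) auto

lemma SS_Suc: "SS (Suc N) q = (if q = (0,0) then 1 else 0) + PS (SS N) q / 2"
proof (induction N arbitrary: q)
  case 0
  show ?case by (simp add: SS_def num_walks_0 PS_def)
next
  case (Suc N)
  have A0: "SS (Suc (Suc N)) q = SS (Suc N) q + real (num_walks (Suc N) q) * (1/2)^(Suc N)"
    unfolding SS_def by simp
  have A: "SS (Suc (Suc N)) q = (if q = (0,0) then 1 else 0) + PS (SS N) q / 2 + PS (\<lambda>r. real (num_walks N r)) q * (1/2)^N / 2"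
    using A0 Suc.IH num_walks_Suc[of N q] by simp
  have B: "PS (SS N) q / 2 + PS (\<lambda>r. real (num_walks N r)) q * (1/2)^N / 2
     = PS (\<lambda>r. SS N r + (1/2)^N * real (num_walks N r)) q / 2"
    unfolding PS_lin by (simp add: algebra_simps add_divide_distrib)
  have C: "(\<lambda>r. SS N r + (1/2)^N * real (num_walks N r)) = SS (Suc N)"
    unfolding SS_def by (auto simp: fun_eq_iff algebra_simps)
  show ?case using A B unfolding C by linarith
qed

lemma SS_le: "SS N q \<le> GG q"
proof (induction N arbitrary: q)
  case 0 then show ?case by (simp add: SS_def GG_nonneg)
next
  case (Suc N)
  have "PS (SS N) q \<le> PS GG q" by (rule PS_mono) (rule Suc.IH)
  then show ?case using SS_Suc[of N q] GG_eq[of "fst q" "snd q"] by auto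
qed

lemma summable_walks: "summable (\<lambda>n. real (num_walks n q) * (1/2)^n)"
  by (rule summableI_nonneg_bounded[where x="GG q"]) (use SS_le in \<open>auto simp: SS_def\<close>)

definition FS :: "nat \<times> nat \<Rightarrow> real" where
  "FS q = (\<Sum>n. real (num_walks n q) * (1/2)^n)"

lemma SS_lim: "(\<lambda>N. SS N q) \<longlonglongrightarrow> FS q"
  unfolding SS_def FS_def by (rule summable_LIMSEQ[OF summable_walks])

lemma if_lim: "(\<lambda>N. if P then X N else 0) \<longlonglongrightarrow> (if P then (L::real) else 0)" if "X \<longlonglongrightarrow> L"
  using that by (cases P) auto

lemma isol_FS: "isol FS"
  unfolding isol_def
proof
  fix q
  have "(\<lambda>N. SS (Suc N) q) \<longlonglongrightarrow> FS q" using SS_lim by (rule LIMSEQ_Suc)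
  moreover have "(\<lambda>N. SS (Suc N) q) \<longlonglongrightarrow> (if q = (0,0) then 1 else 0) + PS FS q / 2"
    unfolding SS_Suc PS_def
    by (intro tendsto_intros if_lim SS_lim) auto
  ultimately show "FS q = (if q = (0,0) then 1 else 0) + PS FS q / 2" by (rule LIMSEQ_unique)
qed

lemma FS_GG: "FS = GG"
  using isol_FS isol_GG by (rule isol_unique)

lemma walks_half_GG: "(\<lambda>n. real (num_walks n q) * (1/2)^n) sums GG q"
proof -
  have "(\<lambda>n. real (num_walks n q) * (1/2)^n) sums FS q" unfolding FS_def by (rule summable_sums[OF summable_walks])
  then show ?thesis using FS_GG by simp
qed

lemma walks_half: "(\<lambda>n. real (num_walks n (i,0)) * (1/2)^n) sums (if even i then gs (i div 2) else 0)"
proof -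
  have "GG (i,0) = (if even i then gs (i div 2) else 0)"
    using GG_swap[of i 0] by (simp add: GG_def FF_0)
  then show ?thesis using walks_half_GG[of "(i,0)"] by simp
qed

lemma walks_mhalf: "(\<lambda>n. real (num_walks n (i,0)) * (-1/2)^n) sums (if even i then gs (i div 2) else 0)"
proof -
  have t: "real (num_walks n (i,0)) * (-1/2)^n = (-1)^i * (real (num_walks n (i,0)) * (1/2)^n)" for n
  proof (cases "num_walks n (i,0) = 0")
    case False
    then have "even (n + i)" by (rule num_walks_parity)
    then have "(-1::real)^n = (-1)^i" by (cases "even n") (auto simp: neg_one_even_power neg_one_odd_power)
    then show ?thesis by (simp add: power_minus' power_divide)
  qed simp
  have "(\<lambda>n. (-1)^i * (real (num_walks n (i,0)) * (1/2)^n)) sums ((-1)^i * (if even i then gs (i div 2) else 0))"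
    by (rule sums_mult[OF walks_half])
  then show ?thesis unfolding t by (cases "even i") auto
qed

lemma m1_diff: "k \<le> a \<Longrightarrow> (-1::real)^(a-k) = (-1)^a * (-1)^k"
proof -
  assume k: "k \<le> a"
  have kk: "(-1::real)^k * (-1)^k = 1" by (simp add: power_add[symmetric])
  have "a = (a-k) + k" using k by simp
  then have "(-1::real)^a * (-1)^k = (-1)^(a-k) * ((-1)^k * (-1)^k)"
    by (metis power_add mult.assoc)
  then show ?thesis using kk by simp
qed

lemma cc_rec: "(\<Sum>i\<le>k. (-1)^i * gs i / (fact (2*i+1) * fact (2*(k-i)+1))) = 2 / fact (2*k+2)"
proof -
  have "(\<Sum>i\<le>k. (-1)^i * gs i / (fact (2*i+1) * fact (2*(k-i)+1)))
      = (\<Sum>i\<le>k. (-1)^i * real ((2*k+2) choose (2*i+1)) * gs i) / fact (2*k+2)"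
    unfolding sum_divide_distrib
  proof (rule sum.cong[OF refl])
    fix i assume i: "i \<in> {..k}"
    have "real ((2*k+2) choose (2*i+1)) = fact (2*k+2) / (fact (2*i+1) * fact (2*k+2 - (2*i+1)))"
      using i by (intro binomial_fact) auto
    moreover have "2*k+2 - (2*i+1) = 2*(k-i)+1" using i by auto
    ultimately have "real ((2*k+2) choose (2*i+1)) = fact (2*k+2) / (fact (2*i+1) * fact (2*(k-i)+1))"
      by simp
    then show "(-1)^i * gs i / (fact (2*i+1) * fact (2*(k-i)+1))
      = (-1)^i * real ((2*k+2) choose (2*i+1)) * gs i / fact (2*k+2)"
      by simp
  qed
  also have "\<dots> = 2 / fact (2*k+2)" by (simp only: gs_rec)
  finally show ?thesis .
qed

lemma fact_odd_ge: "(6::real)^m \<le> fact (2*m+1)"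
proof (induction m)
  case 0 then show ?case by simp
next
  case (Suc m)
  have "fact (2 * Suc m + 1) = real (2*m+3) * (real (2*m+2) * fact (2*m+1))"
    by (simp add: eval_nat_numeral algebra_simps)
  moreover have "(6::real)^(Suc m) = 6 * 6^m" by simp
  moreover have "6 * 6^m \<le> real (2*m+3) * (real (2*m+2) * fact (2*m+1))"
  proof -
    have "6 * 6^m \<le> 6 * (fact (2*m+1) :: real)" using Suc by simp
    also have "\<dots> \<le> real (2*m+3) * (real (2*m+2) * fact (2*m+1))"
    proof -
      have "(6::real) \<le> real (2*m+3) * real (2*m+2)" by (simp add: algebra_simps)
      then show ?thesis by (metis fact_ge_zero mult.assoc mult_right_mono)
    qed
    finally show ?thesis .
  qed
  ultimately show ?case by metis
qed

lemma geo6: "(\<Sum>i<k. (1/6::real)^(k-i)) \<le> 1/5"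
proof (induction k)
  case 0 then show ?case by simp
next
  case (Suc k)
  have "(\<Sum>i<Suc k. (1/6::real)^(Suc k-i)) = (\<Sum>i<k. (1/6::real)^(Suc k-i)) + 1/6"
    by simp
  also have "(\<Sum>i<k. (1/6::real)^(Suc k-i)) = (1/6) * (\<Sum>i<k. (1/6::real)^(k-i))"
    unfolding sum_distrib_left by (rule sum.cong) (auto simp: Suc_diff_le)
  finally show ?case using Suc.IH by simp
qed

lemma gs_bound: "\<bar>gs k\<bar> \<le> fact (2*k+1)"
proof (induction k rule: less_induct)
  case (less k)
  define c where "c i = (-1)^i * gs i / fact (2*i+1)" for i
  have ci: "\<bar>c i\<bar> \<le> 1" if "i < k" for i
  proof -
    have pos: "0 < (fact (2*i+1)::real)" by simp
    have "\<bar>c i\<bar> = \<bar>gs i\<bar> / fact (2*i+1)" unfolding c_def by (simp add: abs_mult del: fact_Suc)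
    also have "\<dots> \<le> 1" by (subst divide_le_eq_1_pos[OF pos]) (rule less[OF that])
    finally show ?thesis .
  qed
  have e: "(\<Sum>i\<le>k. c i / fact (2*(k-i)+1)) = 2 / fact (2*k+2)"
    using cc_rec[of k] unfolding c_def by (simp add: field_simps)
  have ck: "c k = 2 / fact (2*k+2) - (\<Sum>i<k. c i / fact (2*(k-i)+1))"
    using e by (simp add: lessThan_Suc_atMost[symmetric])
  have b1: "\<bar>c i / fact (2*(k-i)+1)\<bar> \<le> (1/6)^(k-i)" if "i < k" for i
  proof -
    have "\<bar>c i / fact (2*(k-i)+1)\<bar> \<le> 1 / fact (2*(k-i)+1)"
      using ci[OF that] by (simp add: abs_mult divide_right_mono)
    also have "\<dots> \<le> 1 / 6^(k-i)"
      using fact_odd_ge[of "k-i"] by (intro divide_left_mono) auto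
    finally show ?thesis by (simp add: power_one_over)
  qed
  have "\<bar>c k\<bar> \<le> 1"
  proof (cases "k = 0")
    case True then show ?thesis using ck by simp
  next
    case False
    have f4: "(4::real) \<le> fact (2*k+2)"
    proof -
      have "fact 4 \<le> (fact (2*k+2) :: real)" using False by (intro fact_mono) auto
      moreover have "(fact 4::real) = 24" by (simp add: eval_nat_numeral)
      ultimately show ?thesis by simp
    qed
    have "\<bar>c k\<bar> \<le> 2 / fact (2*k+2) + \<bar>\<Sum>i<k. c i / fact (2*(k-i)+1)\<bar>"
      unfolding ck by (rule abs_triangle_ineq4[THEN order_trans]) simp
    also have "\<bar>\<Sum>i<k. c i / fact (2*(k-i)+1)\<bar> \<le> (\<Sum>i<k. (1/6::real)^(k-i))"
      by (rule order_trans[OF sum_abs]) (intro sum_mono b1, simp)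
    also have "2 / fact (2*k+2) \<le> (1/2::real)"
      using f4 by (simp add: divide_simps)
    finally show ?thesis using geo6[of k] by simp
  qed
  moreover have "\<bar>c k\<bar> = \<bar>gs k\<bar> / fact (2*k+1)" unfolding c_def by (simp add: abs_mult del: fact_Suc)
  moreover have pos: "0 < (fact (2*k+1)::real)" by simp
  ultimately show ?case by (metis divide_le_eq_1_pos)
qed

lemma odd_summ:
  fixes c :: "nat \<Rightarrow> real"
  assumes c: "\<And>k. \<bar>c k\<bar> \<le> 1" and x: "\<bar>x\<bar> < 1"
  shows "summable (\<lambda>k. norm (c k * x^(2*k+1)))"
proof (rule summable_comparison_test[where g="\<lambda>k. \<bar>x\<bar>^k"])
  show "summable (\<lambda>k. \<bar>x\<bar>^k)" using x by (intro summable_geometric) simp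
  show "\<exists>N. \<forall>n\<ge>N. norm (norm (c n * x ^ (2 * n + 1))) \<le> \<bar>x\<bar> ^ n"
  proof (intro exI allI impI)
    fix n :: nat
    have "norm (norm (c n * x ^ (2 * n + 1))) = \<bar>c n\<bar> * \<bar>x\<bar>^(2*n+1)" by (simp add: abs_mult power_abs)
    also have "\<dots> \<le> 1 * \<bar>x\<bar>^(2*n+1)" using c[of n] by (intro mult_right_mono) auto
    also have "\<dots> \<le> \<bar>x\<bar>^n" unfolding mult_1_left using x by (intro power_decreasing) auto
    finally show "norm (norm (c n * x ^ (2 * n + 1))) \<le> \<bar>x\<bar> ^ n" .
  qed
qed

lemma gs_coef_bound: "\<bar>gs k / fact (2*k+1)\<bar> \<le> 1"
proof -
  have pos: "0 < (fact (2*k+1)::real)" by simp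
  have "\<bar>gs k / fact (2*k+1)\<bar> = \<bar>gs k\<bar> / fact (2*k+1)"
    unfolding abs_divide using abs_of_pos[OF pos] by simp
  also have "\<dots> \<le> 1" by (subst divide_le_eq_1_pos[OF pos]) (rule gs_bound)
  finally show ?thesis .
qed

lemma conv_tan:
  "(\<Sum>i\<le>k. (gs i / fact (2*i+1) * x^(2*i+1)) * ((-1)^(k-i) / fact (2*(k-i)+1) * x^(2*(k-i)+1)))
     = (-1)^k * 2 / fact (2*k+2) * (x::real)^(2*k+2)"
proof -
  have "(\<Sum>i\<le>k. (gs i / fact (2*i+1) * x^(2*i+1)) * ((-1)^(k-i) / fact (2*(k-i)+1) * x^(2*(k-i)+1)))
     = (\<Sum>i\<le>k. ((-1)^k * x^(2*k+2)) * ((-1)^i * gs i / (fact (2*i+1) * fact (2*(k-i)+1))))"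
  proof (rule sum.cong[OF refl])
    fix i assume i: "i \<in> {..k}"
    have e: "2*i+1 + (2*(k-i)+1) = 2*k+2" using i by auto
    have p: "x^(2*i+1) * x^(2*(k-i)+1) = x^(2*k+2)"
      by (subst power_add[symmetric]) (simp only: e)
    have m: "(-1::real)^(k-i) = (-1)^k * (-1)^i" using i by (simp add: m1_diff)
    show "(gs i / fact (2*i+1) * x^(2*i+1)) * ((-1)^(k-i) / fact (2*(k-i)+1) * x^(2*(k-i)+1))
       = ((-1)^k * x^(2*k+2)) * ((-1)^i * gs i / (fact (2*i+1) * fact (2*(k-i)+1)))"
      unfolding m p[symmetric] by (simp add: field_simps del: fact_Suc)
  qed
  also have "\<dots> = ((-1)^k * x^(2*k+2)) * (2 / fact (2*k+2))"
    by (simp only: sum_distrib_left[symmetric] cc_rec)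
  finally show ?thesis by simp
qed

lemma conv_tanh:
  "(\<Sum>i\<le>k. ((-1)^i * gs i / fact (2*i+1) * x^(2*i+1)) * (1 / fact (2*(k-i)+1) * x^(2*(k-i)+1)))
     = 2 / fact (2*k+2) * (x::real)^(2*k+2)"
proof -
  have "(\<Sum>i\<le>k. ((-1)^i * gs i / fact (2*i+1) * x^(2*i+1)) * (1 / fact (2*(k-i)+1) * x^(2*(k-i)+1)))
     = (\<Sum>i\<le>k. x^(2*k+2) * ((-1)^i * gs i / (fact (2*i+1) * fact (2*(k-i)+1))))"
  proof (rule sum.cong[OF refl])
    fix i assume i: "i \<in> {..k}"
    have e: "2*i+1 + (2*(k-i)+1) = 2*k+2" using i by auto
    have p: "x^(2*i+1) * x^(2*(k-i)+1) = x^(2*k+2)"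
      by (subst power_add[symmetric]) (simp only: e)
    show "((-1)^i * gs i / fact (2*i+1) * x^(2*i+1)) * (1 / fact (2*(k-i)+1) * x^(2*(k-i)+1))
       = x^(2*k+2) * ((-1)^i * gs i / (fact (2*i+1) * fact (2*(k-i)+1)))"
      unfolding p[symmetric] by (simp add: field_simps del: fact_Suc)
  qed
  also have "\<dots> = x^(2*k+2) * (2 / fact (2*k+2))"
    by (simp only: sum_distrib_left[symmetric] cc_rec)
  finally show ?thesis by simp
qed

lemma cos_shift: "(\<lambda>k. (-1)^k * 2 / fact (2*k+2) * (x::real)^(2*k+2)) sums (2 - 2 * cos x)"
proof -
  have "(\<lambda>n. (- 1) ^ Suc n / fact (2 * Suc n) * x ^ (2 * Suc n)) sums (cos x - 1)"
    using cos_paired[of x] by (subst sums_Suc_iff) simp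
  from sums_mult[OF this, of "-2"] show ?thesis
    by (simp add: algebra_simps)
qed

lemma sinh_paired: "(\<lambda>k. 1 / fact (2*k+1) * (x::real)^(2*k+1)) sums sinh x"
proof -
  let ?f = "\<lambda>n. if even n then 0 else x ^ n /\<^sub>R fact n"
  have sm: "strict_mono (\<lambda>k::nat. 2*k+1)" by (rule strict_monoI) simp
  have z: "\<And>n. n \<notin> range (\<lambda>k::nat. 2*k+1) \<Longrightarrow> ?f n = 0"
  proof -
    fix n :: nat assume nr: "n \<notin> range (\<lambda>k::nat. 2*k+1)"
    show "?f n = 0"
    proof (cases "even n")
      case False
      then obtain k where "n = 2*k+1" by (rule oddE)
      with nr show ?thesis by auto
    qed simp
  qed
  have "(\<lambda>k. ?f (2*k+1)) sums sinh x" using sums_mono_reindex[of "\<lambda>k::nat. 2*k+1" ?f, OF sm z] sinh_converges[of x] by blast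
  then show ?thesis by (simp add: divide_inverse_commute)
qed

lemma cosh_paired: "(\<lambda>k. 1 / fact (2*k) * (x::real)^(2*k)) sums cosh x"
proof -
  let ?f = "\<lambda>n. if even n then x ^ n /\<^sub>R fact n else 0"
  have sm: "strict_mono (\<lambda>k::nat. 2*k)" by (rule strict_monoI) simp
  have z: "\<And>n. n \<notin> range (\<lambda>k::nat. 2*k) \<Longrightarrow> ?f n = 0"
  proof -
    fix n :: nat assume nr: "n \<notin> range (\<lambda>k::nat. 2*k)"
    show "?f n = 0"
    proof (cases "even n")
      case True
      then obtain k where "n = 2*k" by (rule evenE)
      with nr show ?thesis by auto
    qed simp
  qed
  have "(\<lambda>k. ?f (2*k)) sums cosh x" using sums_mono_reindex[of "\<lambda>k::nat. 2*k" ?f, OF sm z] cosh_converges[of x] by blast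
  then show ?thesis by (simp add: divide_inverse_commute)
qed

lemma cosh_shift: "(\<lambda>k. 2 / fact (2*k+2) * (x::real)^(2*k+2)) sums (2 * cosh x - 2)"
proof -
  have "(\<lambda>n. 1 / fact (2 * Suc n) * x ^ (2 * Suc n)) sums (cosh x - 1)"
    using cosh_paired[of x] by (subst sums_Suc_iff) simp
  from sums_mult[OF this, of "2"] show ?thesis
    by (simp add: algebra_simps)
qed

lemma sin_nz: "(x::real) \<noteq> 0 \<Longrightarrow> \<bar>x\<bar> < 1 \<Longrightarrow> sin x \<noteq> 0"
proof -
  assume x: "x \<noteq> 0" "\<bar>x\<bar> < 1"
  have p: "1 < pi" using pi_ge_two by simp
  show ?thesis
  proof (cases "x > 0")
    case True then show ?thesis using sin_gt_zero[of x] x p by auto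
  next
    case False
    then have "0 < -x" "-x < pi" using x p by auto
    then have "sin (-x) > 0" by (rule sin_gt_zero)
    then show ?thesis by simp
  qed
qed

lemma tan_series:
  assumes x: "\<bar>x\<bar> < 1"
  shows "(\<lambda>k. gs k / fact (2*k+1) * x^(2*k+1)) sums (2 * tan (x/2))"
proof -
  define a where "a k = gs k / fact (2*k+1) * x^(2*k+1)" for k
  define b where "b k = (-1)^k / fact (2*k+1) * x^(2*k+1)" for k
  have sa: "summable (\<lambda>k. norm (a k))" unfolding a_def
    by (rule odd_summ[OF gs_coef_bound x])
  have sb: "summable (\<lambda>k. norm (b k))" unfolding b_def
    by (rule odd_summ[OF _ x]) (simp add: abs_mult del: fact_Suc)
  have bs: "suminf b = sin x" unfolding b_def using sin_paired[of x] by (simp add: sums_iff)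
  define A where "A = suminf a"
  have aA: "a sums A" unfolding A_def using sa by (simp add: summable_norm_cancel summable_sums)
  have "(\<lambda>k. \<Sum>i\<le>k. a i * b (k - i)) sums (A * sin x)"
    using Cauchy_product_sums[OF sa sb] unfolding A_def bs .
  moreover have "(\<lambda>k. \<Sum>i\<le>k. a i * b (k - i)) = (\<lambda>k. (-1)^k * 2 / fact (2*k+2) * x^(2*k+2))"
    unfolding a_def b_def by (rule ext) (rule conv_tan)
  ultimately have "(\<lambda>k. (-1)^k * 2 / fact (2*k+2) * x^(2*k+2)) sums (A * sin x)" by simp
  then have eq: "A * sin x = 2 - 2 * cos x" using cos_shift[of x] by (rule sums_unique2)
  have "A = 2 * tan (x/2)"
  proof (cases "x = 0")
    case True
    then have "a = (\<lambda>k. 0)" unfolding a_def by auto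
    then have "A = 0" unfolding A_def by simp
    then show ?thesis using True by simp
  next
    case False
    define h where "h = x/2"
    have xh: "x = 2*h" unfolding h_def by simp
    have sx: "sin x \<noteq> 0" using sin_nz False x by blast
    have s2: "sin x = 2 * sin h * cos h" unfolding xh by (rule sin_double)
    have c2: "cos x = 1 - 2 * sin h ^ 2" unfolding xh by (rule cos_double_sin)
    have sh: "sin h \<noteq> 0" and ch: "cos h \<noteq> 0" using sx s2 by auto
    have "A * (2 * sin h * cos h) = 4 * sin h ^ 2" using eq s2 c2 by simp
    then have "A * cos h = 2 * sin h" using sh by (simp add: power2_eq_square algebra_simps)
    then have "A = 2 * sin h / cos h" using ch by (simp add: field_simps)
    then show ?thesis unfolding h_def tan_def by simp
  qed
  then show ?thesis using aA unfolding a_def by simp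
qed

lemma tanh_series:
  assumes x: "\<bar>x\<bar> < 1"
  shows "(\<lambda>k. (-1)^k * gs k / fact (2*k+1) * x^(2*k+1)) sums (2 * (exp x - 1) / (exp x + 1))"
proof -
  define a where "a k = (-1)^k * gs k / fact (2*k+1) * x^(2*k+1)" for k
  define b where "b k = 1 / fact (2*k+1) * x^(2*k+1)" for k
  have cb: "\<bar>(-1)^k * gs k / fact (2*k+1)\<bar> \<le> 1" for k
    using gs_coef_bound[of k] by (simp add: abs_mult del: fact_Suc)
  have sa: "summable (\<lambda>k. norm (a k))" unfolding a_def
    by (rule odd_summ[OF cb x])
  have sb: "summable (\<lambda>k. norm (b k))" unfolding b_def
    by (rule odd_summ[OF _ x]) (simp del: fact_Suc)
  have bs: "suminf b = sinh x" unfolding b_def using sinh_paired[of x] by (simp add: sums_iff)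
  define A where "A = suminf a"
  have aA: "a sums A" unfolding A_def using sa by (simp add: summable_norm_cancel summable_sums)
  have "(\<lambda>k. \<Sum>i\<le>k. a i * b (k - i)) sums (A * sinh x)"
    using Cauchy_product_sums[OF sa sb] unfolding A_def bs .
  moreover have "(\<lambda>k. \<Sum>i\<le>k. a i * b (k - i)) = (\<lambda>k. 2 / fact (2*k+2) * x^(2*k+2))"
    unfolding a_def b_def by (rule ext) (rule conv_tanh)
  ultimately have "(\<lambda>k. 2 / fact (2*k+2) * x^(2*k+2)) sums (A * sinh x)" by simp
  then have eq: "A * sinh x = 2 * cosh x - 2" using cosh_shift[of x] by (rule sums_unique2)
  have "A = 2 * (exp x - 1) / (exp x + 1)"
  proof (cases "x = 0")
    case True
    then have "a = (\<lambda>k. 0)" unfolding a_def by auto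
    then have "A = 0" unfolding A_def by simp
    then show ?thesis using True by simp
  next
    case False
    define e where "e = exp x"
    have e0: "0 < e" unfolding e_def by simp
    have e1: "e \<noteq> 1" unfolding e_def using False by simp
    have em: "exp (-x) = 1 / e" unfolding e_def by (simp add: exp_minus field_simps)
    have "A * ((e - 1/e) / 2) = 2 * ((e + 1/e) / 2) - 2"
      using eq unfolding sinh_field_def cosh_field_def em e_def[symmetric] .
    then have "A * (e*e - 1) = 2 * (e*e + 1) - 4 * e" using e0 by (simp add: field_simps)
    then have "A * ((e - 1) * (e + 1)) = 2 * (e - 1) * (e - 1)" by (simp add: algebra_simps)
    then have "(e - 1) * (A * (e + 1)) = (e - 1) * (2 * (e - 1))" by (simp add: algebra_simps)
    then have "A * (e + 1) = 2 * (e - 1)" using e1 by simp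
    then show ?thesis unfolding e_def[symmetric] using e0 by (simp add: field_simps)
  qed
  then show ?thesis using aA unfolding a_def by simp
qed

lemma powser_c0:
  fixes c :: "nat \<Rightarrow> real"
  assumes d: "0 < \<delta>" and s: "\<And>y. 0 < y \<Longrightarrow> y < \<delta> \<Longrightarrow> (\<lambda>n. c n * y^n) sums 0"
  shows "c 0 = 0"
proof -
  define f where "f y = (\<Sum>n. c n * y^n)" for y
  have "summable (\<lambda>n. c n * (\<delta>/2)^n)" using s[of "\<delta>/2"] d by (simp add: sums_iff)
  then have "isCont f 0" unfolding f_def by (rule isCont_powser) (use d in simp)
  then have "(f \<longlongrightarrow> f 0) (at 0)" by (simp add: isCont_def)
  then have l1: "(f \<longlongrightarrow> c 0) (at_right 0)" by (simp add: f_def filterlim_at_split)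
  have "eventually (\<lambda>y. f y = 0) (at_right 0)"
    unfolding eventually_at_right_field using d s unfolding f_def
    by (intro exI[of _ \<delta>]) (auto simp: sums_iff)
  then have l2: "(f \<longlongrightarrow> 0) (at_right 0)" by (rule tendsto_eventually)
  show ?thesis using tendsto_unique[OF trivial_limit_at_right_real l1 l2] .
qed

lemma powser_unique0:
  fixes c :: "nat \<Rightarrow> real"
  assumes d: "0 < \<delta>" and s: "\<And>y. 0 < y \<Longrightarrow> y < \<delta> \<Longrightarrow> (\<lambda>n. c n * y^n) sums 0"
  shows "c n = 0"
  using s
proof (induction n arbitrary: c)
  case 0 then show ?case using powser_c0[OF d] by blast
next
  case (Suc n)
  have c0: "c 0 = 0" using powser_c0[OF d Suc.prems] by blast
  have "(\<lambda>n. c (Suc n) * y^n) sums 0" if y: "0 < y" "y < \<delta>" for y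
  proof -
    have "(\<lambda>n. c (Suc n) * y^(Suc n)) sums 0"
      using Suc.prems[OF y] c0 by (subst sums_Suc_iff) simp
    from sums_mult[OF this, of "1/y"] show ?thesis using y by (simp add: field_simps)
  qed
  then show ?case using Suc.IH[of "\<lambda>n. c (Suc n)"] by blast
qed

lemma tan_series4:
  assumes x: "\<bar>x\<bar> < 1/2"
  shows "(\<lambda>k. 4^k * gs k * x^(2*k+1) / fact (2*k+1)) sums tan x"
proof -
  have "(\<lambda>k. gs k / fact (2*k+1) * (2*x)^(2*k+1)) sums (2 * tan (2*x/2))"
    using x by (intro tan_series) simp
  from sums_mult[OF this, of "1/2"]
  have s1: "(\<lambda>k. 1/2 * (gs k / fact (2*k+1) * (2*x)^(2*k+1))) sums tan x" by simp
  have eqf: "(\<lambda>k. 1/2 * (gs k / fact (2*k+1) * (2*x)^(2*k+1))) = (\<lambda>k. 4^k * gs k * x^(2*k+1) / fact (2*k+1))"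
  proof (rule ext)
    fix k
    have p: "(2::real)^(2*k+1) = 2 * 4^k"
    proof -
      have "(2::real)^(2*k+1) = (2^2)^k * 2" by (simp only: power_add power_mult power_one_right)
      then show ?thesis by simp
    qed
    have "(2*x)^(2*k+1) = 2 * 4^k * x^(2*k+1)"
      unfolding power_mult_distrib p ..
    then show "1/2 * (gs k / fact (2*k+1) * (2*x)^(2*k+1)) = 4^k * gs k * x^(2*k+1) / fact (2*k+1)"
      by (simp only:) (simp add: divide_simps del: fact_Suc)
  qed
  show ?thesis using s1 unfolding eqf .
qed

lemma tangent_eq: "tangent_number = (\<lambda>k. 4^k * gs k)"
  unfolding tangent_number_def
proof (rule the_equality)
  show "\<exists>\<epsilon>>0. \<forall>x::real. \<bar>x\<bar> < \<epsilon> \<longrightarrow> (\<lambda>n. 4^n * gs n * x^(2*n+1) / fact (2*n+1)) sums tan x"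
  proof (intro exI[of _ "1/2"] conjI allI impI)
    fix x :: real assume x: "\<bar>x\<bar> < 1/2"
    show "(\<lambda>n. 4^n * gs n * x^(2*n+1) / fact (2*n+1)) sums tan x"
      using x by (rule tan_series4)
  qed simp
next
  fix T assume "\<exists>\<epsilon>>0. \<forall>x::real. \<bar>x\<bar> < \<epsilon> \<longrightarrow> (\<lambda>n. T n * x^(2*n+1) / fact (2*n+1)) sums tan x"
  then obtain \<epsilon> where e: "\<epsilon> > 0" and T: "\<And>x. \<bar>x\<bar> < \<epsilon> \<Longrightarrow> (\<lambda>n. T n * x^(2*n+1) / fact (2*n+1)) sums tan x"
    by blast
  define r where "r = min \<epsilon> (1/2)"
  have r: "0 < r" "r \<le> \<epsilon>" "r \<le> 1/2" unfolding r_def using e by auto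
  define c where "c n = (T n - 4^n * gs n) / fact (2*n+1)" for n
  have "c n = 0" for n
  proof (rule powser_unique0[of "r^2"])
    show "0 < r^2" using r by simp
    fix y :: real assume y: "0 < y" "y < r^2"
    define x where "x = sqrt y"
    have x1: "0 < x" unfolding x_def using y by simp
    have x2: "x < r" unfolding x_def using y r by (intro real_less_lsqrt) auto
    have x3: "x^2 = y" unfolding x_def using y by simp
    note x = x1 x2 x3
    have s1': "(\<lambda>k. 4^k * gs k * x^(2*k+1) / fact (2*k+1)) sums tan x"
      using x r by (intro tan_series4) simp
    have s2: "(\<lambda>n. T n * x^(2*n+1) / fact (2*n+1)) sums tan x" by (rule T) (use x r in simp)
    have "(\<lambda>n. T n * x^(2*n+1) / fact (2*n+1) - 4^n * gs n * x^(2*n+1) / fact (2*n+1)) sums (tan x - tan x)"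
      by (rule sums_diff[OF s2 s1'])
    moreover have "(\<lambda>n. T n * x^(2*n+1) / fact (2*n+1) - 4^n * gs n * x^(2*n+1) / fact (2*n+1)) = (\<lambda>n. x * (c n * y^n))"
    proof (rule ext)
      fix n
      have pw: "x^(2*n+1) = x * y^n" unfolding x(3)[symmetric] by (simp add: power_mult[symmetric])
      show "T n * x^(2*n+1) / fact (2*n+1) - 4^n * gs n * x^(2*n+1) / fact (2*n+1) = x * (c n * y^n)"
        unfolding pw c_def by (simp add: diff_divide_distrib algebra_simps del: fact_Suc)
    qed
    ultimately have "(\<lambda>n. x * (c n * y^n)) sums 0" by simp
    from sums_mult[OF this, of "1/x"] show "(\<lambda>n. c n * y^n) sums 0" using x by simp
  qed
  then show "T = (\<lambda>k. 4^k * gs k)" unfolding c_def by (auto simp: fun_eq_iff)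
qed

definition bb :: "nat \<Rightarrow> real" where
  "bb m = (-1)^m * gs m / fact (2*m+1) / (4 * (4^(m+1) - 1))"

definition Bc :: "nat \<Rightarrow> real" where
  "Bc n = (if n = 0 then 1 else if n = 1 then -1/2 else if odd n then 0
     else bb (n div 2 - 1) * fact n)"

lemma bb_bound: "\<bar>bb m\<bar> \<le> 1"
proof -
  have c: "\<bar>(-1)^m * gs m / fact (2*m+1)\<bar> \<le> 1"
    using gs_coef_bound[of m] by (simp add: abs_mult del: fact_Suc)
  have d: "(1::real) \<le> 4 * (4^(m+1) - 1)"
  proof -
    have "(4::real)^1 \<le> 4^(m+1)" by (rule power_increasing) auto
    then have "(4::real) \<le> 4^(m+1)" by (simp only: power_one_right)
    moreover have "1 \<le> 4 * (P - 1)" if "4 \<le> P" for P :: real using that by simp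
    ultimately show ?thesis by blast
  qed
  have "\<bar>bb m\<bar> = \<bar>(-1)^m * gs m / fact (2*m+1)\<bar> / (4 * (4^(m+1) - 1))"
    unfolding bb_def using d by (simp add: abs_divide del: fact_Suc)
  also have "\<dots> \<le> 1 / 1" using c d by (intro frac_le) auto
  finally show ?thesis by simp
qed

lemma even_summ:
  assumes x: "\<bar>x\<bar> < 1"
  shows "summable (\<lambda>m. bb m * (x::real)^(2*m+2))"
proof -
  have "summable (\<lambda>m. norm (bb m * x^(2*m+2)))"
  proof (rule summable_comparison_test[where g="\<lambda>k. \<bar>x\<bar>^k"])
    show "summable (\<lambda>k. \<bar>x\<bar>^k)" using x by (intro summable_geometric) simp
    show "\<exists>N. \<forall>n\<ge>N. norm (norm (bb n * x ^ (2 * n + 2))) \<le> \<bar>x\<bar> ^ n"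
    proof (intro exI allI impI)
      fix n :: nat
      have "norm (norm (bb n * x ^ (2 * n + 2))) = \<bar>bb n\<bar> * \<bar>x\<bar>^(2*n+2)" by (simp add: abs_mult power_abs)
      also have "\<dots> \<le> 1 * \<bar>x\<bar>^(2*n+2)" using bb_bound[of n] by (intro mult_right_mono) auto
      also have "\<dots> \<le> \<bar>x\<bar>^n" unfolding mult_1_left using x by (intro power_decreasing) auto
      finally show "norm (norm (bb n * x ^ (2 * n + 2))) \<le> \<bar>x\<bar> ^ n" .
    qed
  qed
  then show ?thesis by (rule summable_norm_cancel)
qed

definition QQ :: "real \<Rightarrow> real" where
  "QQ x = (\<Sum>m. bb m * x^(2*m+2))"

lemma QQ_sums: "\<bar>x\<bar> < 1 \<Longrightarrow> (\<lambda>m. bb m * x^(2*m+2)) sums QQ x"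
  unfolding QQ_def by (rule summable_sums[OF even_summ])

lemma Bc_sums:
  assumes x: "\<bar>x\<bar> < 1"
  shows "(\<lambda>n. Bc n * x^n / fact n) sums (1 - x/2 + QQ x)"
proof -
  define f where "f n = Bc n * x^n / fact n" for n
  define h where "h n = f (n+2)" for n
  have sm: "strict_mono (\<lambda>k::nat. 2*k)" by (rule strict_monoI) simp
  have z: "\<And>n. n \<notin> range (\<lambda>k::nat. 2*k) \<Longrightarrow> h n = 0"
  proof -
    fix n :: nat assume nr: "n \<notin> range (\<lambda>k::nat. 2*k)"
    then have "odd n" by auto
    then have "odd (n+2)" by simp
    then show "h n = 0" unfolding h_def f_def Bc_def by auto
  qed
  have hm: "h (2*m) = bb m * x^(2*m+2)" for m
  proof -
    have "2*m+2 \<noteq> 0" "2*m+2 \<noteq> 1" "even (2*m+2)" "(2*m+2) div 2 - 1 = m" by auto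
    then show ?thesis unfolding h_def f_def Bc_def by (simp del: fact_Suc)
  qed
  have "(\<lambda>m. h (2*m)) sums QQ x" unfolding hm by (rule QQ_sums[OF x])
  then have "h sums QQ x" using sums_mono_reindex[of "\<lambda>k::nat. 2*k" h, OF sm z] by blast
  then have "(\<lambda>n. f (Suc (Suc n))) sums QQ x" unfolding h_def by simp
  then have A: "(\<lambda>n. f (Suc n)) sums (QQ x + f (Suc 0))"
    using sums_Suc_iff[of "\<lambda>n. f (Suc n)" "QQ x"] by simp
  then have "f sums (QQ x + f (Suc 0) + f 0)"
    using sums_Suc_iff[of f "QQ x + f (Suc 0)"] by simp
  moreover have "f 0 = 1" "f (Suc 0) = - x/2" unfolding f_def Bc_def by auto
  ultimately have "f sums (QQ x + - x/2 + 1)" by simp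
  then show ?thesis unfolding f_def by (simp add: algebra_simps)
qed

lemma QQ_diff:
  assumes x: "\<bar>x\<bar> < 1/2"
  shows "QQ x - QQ (2*x) = - (x/2) * ((exp x - 1) / (exp x + 1))"
proof -
  have x1: "\<bar>x\<bar> < 1" and x2: "\<bar>2*x\<bar> < 1" using x by auto
  have s: "(\<lambda>m. bb m * x^(2*m+2) - bb m * (2*x)^(2*m+2)) sums (QQ x - QQ (2*x))"
    by (rule sums_diff[OF QQ_sums[OF x1] QQ_sums[OF x2]])
  have t: "(\<lambda>m. (-x/4) * ((-1)^m * gs m / fact (2*m+1) * x^(2*m+1))) sums ((-x/4) * (2 * (exp x - 1) / (exp x + 1)))"
    by (rule sums_mult[OF tanh_series[OF x1]])
  have e: "bb m * x^(2*m+2) - bb m * (2*x)^(2*m+2) = (-x/4) * ((-1)^m * gs m / fact (2*m+1) * x^(2*m+1))" for m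
  proof -
    have p4: "(2*x)^(2*m+2) = 4^(m+1) * x^(2*m+2)"
    proof -
      have "(2::real)^(2*m+2) = (2^2)^(m+1)" by (simp only: power_mult[symmetric]) simp
      then show ?thesis by (simp add: power_mult_distrib)
    qed
    have px: "x^(2*m+2) = x * x^(2*m+1)" by simp
    have d: "(4::real) * (4^(m+1) - 1) \<noteq> 0"
    proof -
      have "(1::real) < 4^(m+1)" by (rule one_less_power) auto
      then show ?thesis by simp
    qed
    have "bb m * x^(2*m+2) - bb m * (2*x)^(2*m+2) = bb m * (1 - 4^(m+1)) * x^(2*m+2)"
      unfolding p4 by (simp add: algebra_simps)
    also have "bb m * (1 - 4^(m+1)) = - ((-1)^m * gs m / fact (2*m+1)) / 4"
      unfolding bb_def using d by (simp add: field_simps del: fact_Suc)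
    finally show ?thesis unfolding px by (simp add: algebra_simps)
  qed
  have "(\<lambda>m. bb m * x^(2*m+2) - bb m * (2*x)^(2*m+2)) sums ((-x/4) * (2 * (exp x - 1) / (exp x + 1)))"
    using t unfolding e .
  with s have r: "QQ x - QQ (2*x) = (-x/4) * (2 * (exp x - 1) / (exp x + 1))" by (rule sums_unique2)
  have ne: "exp x + 1 \<noteq> 0" by (smt (verit) exp_gt_zero)
  show ?thesis unfolding r using ne by (simp add: field_simps)
qed

lemma QQ_lim: "(QQ \<longlongrightarrow> 0) (at 0)"
proof -
  define W where "W z = (\<Sum>m. bb m * z^m)" for z :: real
  have QW: "QQ y = y^2 * W (y^2)" if "\<bar>y\<bar> < 1" for y
  proof -
    have "(\<lambda>m. bb m * y^(2*m+2)) sums QQ y" using QQ_sums[OF that] .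
    moreover have eqn: "(\<lambda>m. bb m * y^(2*m+2)) = (\<lambda>m. y^2 * (bb m * (y^2)^m))"
    proof (rule ext)
      fix m
      have "y^(2*m+2) = y^2 * (y^2)^m" by (metis power_add power_mult mult.commute)
      then show "bb m * y^(2*m+2) = y^2 * (bb m * (y^2)^m)" by simp
    qed
    ultimately have "(\<lambda>m. y^2 * (bb m * (y^2)^m)) sums QQ y" by simp
    moreover have "summable (\<lambda>m. bb m * (y^2)^m)"
    proof -
      have "summable (\<lambda>m. bb m * y^(2*m+2))" by (rule even_summ[OF that])
      then have "summable (\<lambda>m. y^2 * (bb m * (y^2)^m))"
        unfolding eqn .
      then show ?thesis
      proof (cases "y = 0")
        case True then show ?thesis by simp
      next
        case False
        from summable_mult[OF \<open>summable (\<lambda>m. y^2 * (bb m * (y^2)^m))\<close>, of "1/y^2"]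
        show ?thesis using False by simp
      qed
    qed
    then have "(\<lambda>m. y^2 * (bb m * (y^2)^m)) sums (y^2 * W (y^2))"
      unfolding W_def by (intro sums_mult summable_sums)
    ultimately show ?thesis by (rule sums_unique2)
  qed
  have "summable (\<lambda>m. bb m * (1/2)^m)"
  proof -
    have "summable (\<lambda>m. norm (bb m * (1/2::real)^m))"
    proof (rule summable_comparison_test[where g="\<lambda>k. (1/2::real)^k"])
      show "summable (\<lambda>k. (1/2::real)^k)" by (intro summable_geometric) simp
      show "\<exists>N. \<forall>n\<ge>N. norm (norm (bb n * (1/2::real)^n)) \<le> (1/2) ^ n"
      proof (intro exI allI impI)
        fix n :: nat
        have "norm (norm (bb n * (1/2::real)^n)) = \<bar>bb n\<bar> * (1/2)^n" by (simp add: abs_mult)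
        also have "\<dots> \<le> 1 * (1/2)^n" using bb_bound[of n] by (intro mult_right_mono) auto
        finally show "norm (norm (bb n * (1/2::real)^n)) \<le> (1/2) ^ n" by simp
      qed
    qed
    then show ?thesis by (rule summable_norm_cancel)
  qed
  then have "isCont W 0" unfolding W_def by (rule isCont_powser) simp
  moreover have "((\<lambda>y::real. y^2) \<longlongrightarrow> 0) (at 0)"
  proof -
    have "((\<lambda>y::real. y^2) \<longlongrightarrow> 0^2) (at 0)" by (intro tendsto_intros)
    then show ?thesis by simp
  qed
  ultimately have "((\<lambda>y::real. W (y^2)) \<longlongrightarrow> W 0) (at 0)"
    by (rule isCont_tendsto_compose)
  then have "((\<lambda>y. y^2 * W (y^2)) \<longlongrightarrow> 0^2 * W 0) (at 0)"
    by (intro tendsto_intros)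
  then have l: "((\<lambda>y. y^2 * W (y^2)) \<longlongrightarrow> 0) (at 0)" by simp
  have ev: "eventually (\<lambda>y. y^2 * W (y^2) = QQ y) (at (0::real))"
    unfolding eventually_at using QW by (intro exI[of _ 1]) auto
  show ?thesis using tendsto_cong[OF ev] l by blast
qed

lemma E_lim: "((\<lambda>y::real. y / (exp y - 1)) \<longlongrightarrow> 1) (at 0)"
proof -
  have "((\<lambda>h. (exp (0 + h) - exp 0) / h) \<longlongrightarrow> (1::real)) (at 0)"
    using DERIV_exp[of 0] unfolding DERIV_def by simp
  then have "((\<lambda>h. (exp h - 1) / h) \<longlongrightarrow> (1::real)) (at 0)" by simp
  then have "((\<lambda>h. inverse ((exp h - 1) / h)) \<longlongrightarrow> inverse (1::real)) (at 0)"
    by (rule tendsto_inverse) simp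
  then show ?thesis by (simp add: inverse_eq_divide)
qed

definition DD :: "real \<Rightarrow> real" where
  "DD x = 1 - x/2 + QQ x - x / (exp x - 1)"

lemma DD_double:
  assumes x: "x \<noteq> 0" "\<bar>x\<bar> < 1/2"
  shows "DD (2*x) = DD x"
proof -
  define e where "e = exp x"
  have e0: "0 < e" unfolding e_def by simp
  have e1: "e \<noteq> 1" unfolding e_def using x by simp
  have e2: "exp (2*x) = e*e" unfolding e_def by (simp add: exp_add[symmetric])
  have q: "QQ x - QQ (2*x) = - (x/2) * ((e - 1) / (e + 1))" unfolding e_def by (rule QQ_diff[OF x(2)])
  have ne1: "e - 1 \<noteq> 0" and ne2: "e + 1 \<noteq> 0" using e0 e1 by auto
  have ne3: "e*e - 1 \<noteq> 0"
  proof -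
    have "e*e - 1 = (e-1)*(e+1)" by (simp add: algebra_simps)
    then show ?thesis using ne1 ne2 by simp
  qed
  have "DD x - DD (2*x) = x/2 + (QQ x - QQ (2*x)) - (x / (e - 1) - 2*x / (e*e - 1))"
    unfolding DD_def e2 e_def[symmetric] by (simp add: algebra_simps)
  also have "\<dots> = 0"
  proof -
    have a: "(e - 1) / (e + 1) = 1 - 2 / (e + 1)" using ne2 by (simp add: field_simps)
    have f: "e*e - 1 = (e-1)*(e+1)" by (simp add: algebra_simps)
    have ne4: "e*e \<noteq> 1" using ne3 by simp
    have b: "x / (e - 1) - 2*x / (e*e - 1) = x / (e + 1)"
    proof -
      have "x / (e - 1) = (x * (e+1)) / ((e - 1) * (e+1))"
        using ne2 by (rule mult_divide_mult_cancel_right[symmetric])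
      then have "x / (e - 1) - 2*x / (e*e - 1) = (x * (e+1) - 2*x) / ((e - 1) * (e+1))"
        unfolding f by (simp only: diff_divide_distrib)
      also have "x * (e+1) - 2*x = (e - 1) * x" by (simp add: algebra_simps)
      also have "(e - 1) * x / ((e - 1) * (e+1)) = x / (e + 1)"
        using ne1 by (rule mult_divide_mult_cancel_left)
      finally show ?thesis .
    qed
    show ?thesis unfolding q a b by (simp add: algebra_simps)
  qed
  finally show ?thesis by simp
qed

lemma DD_lim: "(DD \<longlongrightarrow> 0) (at 0)"
proof -
  have "((\<lambda>x. 1 - x/2 + QQ x - x / (exp x - 1)) \<longlongrightarrow> 1 - 0/2 + 0 - 1) (at (0::real))"
    by (intro tendsto_intros QQ_lim E_lim) auto
  then show ?thesis unfolding DD_def[abs_def] by simp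
qed

lemma DD_zero:
  assumes x: "x \<noteq> 0" "\<bar>x\<bar> < 1/2"
  shows "DD x = 0"
proof -
  define g where "g N = x / 2^N" for N :: nat
  have g0: "g N \<noteq> 0" for N unfolding g_def using x by simp
  have gl: "\<bar>g N\<bar> < 1/2" for N
  proof -
    have "\<bar>g N\<bar> = \<bar>x\<bar> / 2^N" unfolding g_def by (simp add: abs_divide)
    also have "\<dots> \<le> \<bar>x\<bar>" by (simp add: divide_le_eq one_le_power mult_le_cancel_left1)
    finally show ?thesis using x by simp
  qed
  have c: "DD (g N) = DD x" for N
  proof (induction N)
    case 0 then show ?case unfolding g_def by simp
  next
    case (Suc N)
    have "g N = 2 * g (Suc N)" unfolding g_def by simp
    then have "DD (g N) = DD (g (Suc N))" using DD_double[OF g0 gl] by simp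
    then show ?case using Suc by simp
  qed
  have "g \<longlonglongrightarrow> 0"
  proof -
    have "(\<lambda>N. x * (1/2)^N) \<longlonglongrightarrow> x * 0" by (intro tendsto_intros) simp
    moreover have "(\<lambda>N. x * (1/2)^N) = g" unfolding g_def by (auto simp: fun_eq_iff power_one_over)
    ultimately show ?thesis by simp
  qed
  then have "filterlim g (at 0) sequentially"
    by (rule filterlim_atI) (simp add: g0)
  from filterlim_compose[OF DD_lim this] have "(\<lambda>N. DD (g N)) \<longlonglongrightarrow> 0" .
  then have "(\<lambda>N. DD x) \<longlonglongrightarrow> 0" unfolding c .
  then show ?thesis by (simp add: LIMSEQ_const_iff)
qed

lemma Bc_E:
  assumes x: "x \<noteq> 0" "\<bar>x\<bar> < 1/2"
  shows "(\<lambda>n. Bc n * x^n / fact n) sums (x / (exp x - 1))"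
proof -
  have "(\<lambda>n. Bc n * x^n / fact n) sums (1 - x/2 + QQ x)" using x by (intro Bc_sums) simp
  moreover have "1 - x/2 + QQ x = x / (exp x - 1)" using DD_zero[OF x] unfolding DD_def by simp
  ultimately show ?thesis by simp
qed

lemma bernoulli_eq: "bernoulli_num = Bc"
  unfolding bernoulli_num_def
proof (rule the_equality)
  show "\<exists>\<epsilon>>0. \<forall>x::real. x \<noteq> 0 \<and> \<bar>x\<bar> < \<epsilon> \<longrightarrow> (\<lambda>n. Bc n * x ^ n / fact n) sums (x / (exp x - 1))"
    by (intro exI[of _ "1/2"] conjI allI impI) (auto intro: Bc_E)
next
  fix B assume "\<exists>\<epsilon>>0. \<forall>x::real. x \<noteq> 0 \<and> \<bar>x\<bar> < \<epsilon> \<longrightarrow> (\<lambda>n. B n * x ^ n / fact n) sums (x / (exp x - 1))"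
  then obtain \<epsilon> where e: "\<epsilon> > 0" and B: "\<And>x. x \<noteq> 0 \<Longrightarrow> \<bar>x\<bar> < \<epsilon> \<Longrightarrow> (\<lambda>n. B n * x ^ n / fact n) sums (x / (exp x - 1))"
    by blast
  define r where "r = min \<epsilon> (1/2)"
  have r: "0 < r" "r \<le> \<epsilon>" "r \<le> 1/2" unfolding r_def using e by auto
  define c where "c n = (B n - Bc n) / fact n" for n
  have "c n = 0" for n
  proof (rule powser_unique0[of r])
    show "0 < r" using r by simp
    fix y :: real assume y: "0 < y" "y < r"
    have s1: "(\<lambda>n. B n * y ^ n / fact n) sums (y / (exp y - 1))" by (rule B) (use y r in auto)
    have s2: "(\<lambda>n. Bc n * y ^ n / fact n) sums (y / (exp y - 1))" by (rule Bc_E) (use y r in auto)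
    have "(\<lambda>n. B n * y ^ n / fact n - Bc n * y ^ n / fact n) sums (y / (exp y - 1) - y / (exp y - 1))"
      by (rule sums_diff[OF s1 s2])
    moreover have "(\<lambda>n. B n * y ^ n / fact n - Bc n * y ^ n / fact n) = (\<lambda>n. c n * y^n)"
      unfolding c_def by (auto simp: fun_eq_iff diff_divide_distrib algebra_simps)
    ultimately show "(\<lambda>n. c n * y^n) sums 0" by simp
  qed
  then show "B = Bc" unfolding c_def by (auto simp: fun_eq_iff)
qed

lemma bern_val:
  "(if even i then 2 * (2 ^ (i + 2) - 1) * (-1) ^ (i div 2) / real (i div 2 + 1) * bernoulli_num (i + 2) else 0)
    = (if even i then gs (i div 2) else (0::real))"
proof (cases "even i")
  case True
  then obtain m where i: "i = 2*m" by (rule evenE)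
  have d2: "i div 2 = m" using i by simp
  have p: "(2::real)^(i+2) = 4^(m+1)"
  proof -
    have "(2::real)^(i+2) = (2^2)^(m+1)" unfolding i by (simp only: power_mult[symmetric]) simp
    then show ?thesis by simp
  qed
  have ne: "(4::real)^(m+1) - 1 \<noteq> 0"
  proof -
    have "(1::real) < 4^(m+1)" by (rule one_less_power) auto
    then show ?thesis by simp
  qed
  have B: "bernoulli_num (i+2) = (-1)^m * gs m / fact (2*m+1) / (4 * (4^(m+1) - 1)) * fact (2*m+2)"
  proof -
    have "i + 2 \<noteq> 0" "i + 2 \<noteq> 1" "even (i+2)" "(i+2) div 2 - 1 = m" using i by auto
    then show ?thesis unfolding bernoulli_eq Bc_def bb_def using i by simp
  qed
  have f: "(fact (2*m+2) :: real) = (2 * real m + 2) * (fact (2*m+1) :: real)"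
    by (simp add: algebra_simps)
  have mm: "(-1::real)^m * (-1)^m = 1" by (simp add: power_add[symmetric])
  have fne: "(fact (2*m+1) :: real) \<noteq> 0" by simp
  have "2 * (2 ^ (i + 2) - 1) * (-1) ^ (i div 2) / real (i div 2 + 1) * bernoulli_num (i + 2)
     = 2 * (4^(m+1) - 1) * (-1)^m / real (m + 1) * ((-1)^m * gs m / fact (2*m+1) / (4 * (4^(m+1) - 1)) * ((2 * real m + 2) * (fact (2*m+1) :: real)))"
    unfolding p d2 B f ..
  also have "\<dots> = gs m"
  proof -
    have a: "s*s = 1 \<Longrightarrow> Q \<noteq> 0 \<Longrightarrow> F \<noteq> 0 \<Longrightarrow> (M::real) + 1 \<noteq> 0 \<Longrightarrow> 2 * Q * s / (M+1) * (s * g / F / (4 * Q) * ((2*M+2) * F)) = g"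
      for s Q F M g
    proof -
      assume h: "s*s = 1" "Q \<noteq> 0" "F \<noteq> 0" "(M::real) + 1 \<noteq> 0"
      have ss: "s * (s * X) = X" for X :: real by (metis h(1) mult.assoc mult_1)
      show ?thesis using h(2-4) by (simp add: divide_simps ss)
    qed
    have e1: "real (m+1) = real m + 1" by simp
    show ?thesis unfolding e1 by (rule a[OF mm ne fne]) simp
  qed
  finally show ?thesis using True d2 by simp
qed simp

theorem theorem1p3:
  shows "(\<forall>t0 \<in> {1/2, -1/2 :: real}. \<forall>i::nat.
            (\<lambda>n. real (num_walks n (i, 0)) * t0 ^ n) sums
              (if even i then tangent_number (i div 2) / 4 ^ (i div 2) else 0))
       \<and> (\<forall>i::nat.
            (\<lambda>n. real (num_walks n (i, 0)) * (1/2) ^ n) sums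
              (if even i then
                 2 * (2 ^ (i + 2) - 1) * (-1) ^ (i div 2) / real (i div 2 + 1)
                   * bernoulli_num (i + 2)
               else 0))"
proof (intro conjI ballI allI)
  fix t0 :: real and i :: nat
  assume t0: "t0 \<in> {1/2, -1/2}"
  then have t0': "t0 = 1/2 \<or> t0 = -1/2" by simp
  have tv: "(if even i then tangent_number (i div 2) / 4 ^ (i div 2) else 0) = (if even i then gs (i div 2) else (0::real))"
    unfolding tangent_eq by simp
  show "(\<lambda>n. real (num_walks n (i, 0)) * t0 ^ n) sums
              (if even i then tangent_number (i div 2) / 4 ^ (i div 2) else 0)"
    unfolding tv using t0'
  proof
    assume h: "t0 = 1/2" show "(\<lambda>n. real (num_walks n (i, 0)) * t0 ^ n) sums (if even i then gs (i div 2) else 0)"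
      using walks_half[of i] unfolding h .
  next
    assume h: "t0 = -1/2" show "(\<lambda>n. real (num_walks n (i, 0)) * t0 ^ n) sums (if even i then gs (i div 2) else 0)"
      using walks_mhalf[of i] unfolding h .
  qed
next
  fix i :: nat
  show "(\<lambda>n. real (num_walks n (i, 0)) * (1/2) ^ n) sums
              (if even i then
                 2 * (2 ^ (i + 2) - 1) * (-1) ^ (i div 2) / real (i div 2 + 1)
                   * bernoulli_num (i + 2)
               else 0)"
    unfolding bern_val by (rule walks_half)
qed

end
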